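(* Let $2\le n\le6$ and $0<\lambda<1$. For $f:[0,\pi/2]\to(0,\infty)$ set $$S_{n,\lambda}(f)=\int_0^{\pi/2}\sqrt{(f')^2+\lambda^2f^2}\,f^{n-1}\cos^{n-1}\theta\,d\theta .$$ Consider the ODE $$\left(\frac{f'\cos^{n-1}\theta}{\sqrt{(f')^2+\lambda^2f^2}}\right)'-\frac{n\lambda^2f\cos^{n-1}\theta}{\sqrt{(f')^2+\lambda^2f^2}}=0,\qquad f(0)=1,\ f'(0)=A.$$ If for some $A$ the solution $f$ can be extended to $[0,\pi/2]$ and is a minimizer of $S_{n,\lambda}$ (among functions $g$ with $g(0)=1$), then $S_{n,\lambda}(f)<\frac1n$; consequently the totally geodesic hypercone $C(S^{n-1}(\lambda))$ is not area-minimizing in $C(S^n(\lambda))$.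
   Context: $C(S^n(\lambda))$ is the cone over the round $n$-sphere of radius $\lambda$, modelled as $\mathbb{R}^{n+1}$ with metric $dr^2+\lambda^2r^2g_{S^n}$; $C(S^{n-1}(\lambda))$ is the cone over the equator. For a rotationally symmetric hypersurface given in polar coordinates by $r=f(\theta)$, $\theta\in[0,\pi/2]$ the polar angle from the equatorial hyperplane, its area is $n\omega_n\lambda^{n-1}S_{n,\lambda}(f)$, while the truncated cone $C(S^{n-1}(\lambda))\cap\{r\le1\}$ has area $\omega_n\lambda^{n-1}$; the ODE is the Euler–Lagrange equation of $S_{n,\lambda}$. *)

theory Defs
  imports "HOL-Analysis.Analysis"
begin

text \<open>The functional S_{n,lambda}(f), where fd is the derivative of f on [0, pi/2].\<close>
definition S_fun :: "nat \<Rightarrow> real \<Rightarrow> (real \<Rightarrow> real) \<Rightarrow> (real \<Rightarrow> real) \<Rightarrow> real" where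
  "S_fun n lam f fd = integral {0..pi/2}
     (\<lambda>\<theta>. sqrt ((fd \<theta>)\<^sup>2 + lam\<^sup>2 * (f \<theta>)\<^sup>2) * (f \<theta>) ^ (n - 1) * (cos \<theta>) ^ (n - 1))"

definition admissible :: "(real \<Rightarrow> real) \<Rightarrow> (real \<Rightarrow> real) \<Rightarrow> bool" where
  "admissible g gd \<longleftrightarrow> g 0 = 1
     \<and> (\<forall>\<theta>\<in>{0..pi/2}. g \<theta> > 0 \<and> (g has_real_derivative gd \<theta>) (at \<theta> within {0..pi/2}))
     \<and> continuous_on {0..pi/2} gd"

end

theory Submission
  imports Defs
begin
lemma alg:
  fixes s d l g N P C :: real
  assumes "s > 0" "s\<^sup>2 = d\<^sup>2 + l\<^sup>2 * g\<^sup>2"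
  shows "N * P * d * (d * C / s) + P * (g * (N * l\<^sup>2 * g * C / s)) = N * (s * P * C)"
proof -
  have "N * P * d * (d * C / s) + P * (g * (N * l\<^sup>2 * g * C / s)) = N * P * C * (d\<^sup>2 + l\<^sup>2 * g\<^sup>2) / s"
    by (simp add: power2_eq_square add_divide_distrib algebra_simps)
  also have "\<dots> = N * P * C * s\<^sup>2 / s" using assms(2) by simp
  also have "\<dots> = N * (s * P * C)" using assms(1) by (simp add: power2_eq_square)
  finally show ?thesis .
qed

theorem lemma5p5:
  fixes n :: nat and lam A :: real and f fd :: "real \<Rightarrow> real"
  assumes "2 \<le> n" and "n \<le> 6"
    and "0 < lam" and "lam < 1"
    and "\<forall>\<theta>\<in>{0..pi/2}. f \<theta> > 0 \<and> (f has_real_derivative fd \<theta>) (at \<theta> within {0..pi/2})"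
    and "continuous_on {0..pi/2} fd"
    and "f 0 = 1" and "fd 0 = A"
    and "\<forall>\<theta>\<in>{0..<pi/2}.
           ((\<lambda>t. fd t * (cos t) ^ (n - 1) / sqrt ((fd t)\<^sup>2 + lam\<^sup>2 * (f t)\<^sup>2))
              has_real_derivative
              (real n * lam\<^sup>2 * f \<theta> * (cos \<theta>) ^ (n - 1) / sqrt ((fd \<theta>)\<^sup>2 + lam\<^sup>2 * (f \<theta>)\<^sup>2)))
           (at \<theta> within {0..pi/2})"
    and "\<forall>g gd. admissible g gd \<longrightarrow> S_fun n lam f fd \<le> S_fun n lam g gd"
  shows "S_fun n lam f fd < 1 / real n"
proof -
  define s where "s t = sqrt ((fd t)\<^sup>2 + lam\<^sup>2 * (f t)\<^sup>2)" for t
  define u where "u t = fd t * (cos t) ^ (n - 1) / s t" for t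
  define h where "h t = f t ^ n * u t" for t
  define F where "F t = s t * (f t) ^ (n - 1) * (cos t) ^ (n - 1)" for t
  have fpos: "f t > 0" if "t \<in> {0..pi/2}" for t using assms(5) that by blast
  have spos: "s t > 0" if "t \<in> {0..pi/2}" for t
  proof -
    have "lam\<^sup>2 * (f t)\<^sup>2 > 0" using fpos[OF that] assms(3) by simp
    hence "(fd t)\<^sup>2 + lam\<^sup>2 * (f t)\<^sup>2 > 0" by (smt (verit) zero_le_power2)
    thus ?thesis unfolding s_def by simp
  qed
  have fcont: "continuous_on {0..pi/2} f"
    unfolding continuous_on_eq_continuous_within using assms(5) DERIV_continuous by blast
  have scont: "continuous_on {0..pi/2} s"
    unfolding s_def by (intro continuous_intros fcont assms(6))
  have hcont: "continuous_on {0..pi/2} h"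
    unfolding h_def u_def
    by (intro continuous_intros fcont assms(6) scont) (use spos in force)
  have hder: "(h has_real_derivative (real n * F t)) (at t)" if t: "t \<in> {0<..<pi/2}" for t
  proof -
    have t1: "t \<in> {0..pi/2}" "t \<in> {0..<pi/2}" using t by auto
    have ev: "at t within {0..pi/2} = at t"
      using t by (intro at_within_interior) auto
    have d1: "(f has_real_derivative fd t) (at t)" using bspec[OF assms(5) t1(1)] unfolding ev by blast
    have d2: "(u has_real_derivative (real n * lam\<^sup>2 * f t * (cos t) ^ (n - 1) / s t)) (at t)"
    proof -
      have ueq: "u = (\<lambda>t. fd t * (cos t) ^ (n - 1) / sqrt ((fd t)\<^sup>2 + lam\<^sup>2 * (f t)\<^sup>2))"
        by (simp add: fun_eq_iff u_def s_def)
      show ?thesis using bspec[OF assms(9) t1(2)] unfolding ev ueq s_def .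
    qed
    have d3: "((\<lambda>x. f x ^ n) has_real_derivative (real n * f t ^ (n - 1) * fd t)) (at t)"
      using DERIV_power[OF d1] by (simp add: mult_ac)
    have d: "(h has_real_derivative (real n * f t ^ (n - 1) * fd t * u t + f t ^ n * (real n * lam\<^sup>2 * f t * (cos t) ^ (n - 1) / s t))) (at t)"
      unfolding h_def using DERIV_mult[OF d3 d2] by (simp add: mult_ac)
    have sp: "s t > 0" using spos t1 by blast
    have ss: "(s t)\<^sup>2 = (fd t)\<^sup>2 + lam\<^sup>2 * (f t)\<^sup>2" unfolding s_def by simp
    obtain m where m: "n = Suc m" using assms(1) by (cases n) auto
    have fn: "f t ^ n = f t ^ (n - 1) * f t" unfolding m by (simp add: power_Suc2)
    have "real n * f t ^ (n - 1) * fd t * u t + f t ^ n * (real n * lam\<^sup>2 * f t * (cos t) ^ (n - 1) / s t)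
        = real n * F t"
      unfolding u_def fn F_def mult.assoc[of "f t ^ (n - 1)" "f t"]
      by (rule alg[OF sp ss])
    then show ?thesis using d by simp
  qed
  have "((\<lambda>t. real n * F t) has_integral (h (pi/2) - h 0)) {0..pi/2}"
    by (rule fundamental_theorem_of_calculus_interior) (use hcont hder in \<open>auto simp: has_real_derivative_iff_has_vector_derivative[symmetric]\<close>)
  hence "((\<lambda>t. F t) has_integral (h (pi/2) - h 0) / real n) {0..pi/2}"
    using has_integral_cmul[of "\<lambda>t. real n * F t" _ _ "1 / real n"] assms(1) by simp
  hence SF: "S_fun n lam f fd = (h (pi/2) - h 0) / real n"
    unfolding S_fun_def F_def s_def by (simp add: integral_unique)
  have "h (pi/2) = 0" unfolding h_def u_def using assms(1) by simp
  moreover have "h 0 = A / sqrt (A\<^sup>2 + lam\<^sup>2)"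
    unfolding h_def u_def s_def using assms(7,8) by simp
  moreover have "- A / sqrt (A\<^sup>2 + lam\<^sup>2) < 1"
  proof -
    have "A\<^sup>2 < A\<^sup>2 + lam\<^sup>2" using assms(3) by simp
    hence "sqrt (A\<^sup>2) < sqrt (A\<^sup>2 + lam\<^sup>2)" by (rule real_sqrt_less_mono)
    hence "\<bar>A\<bar> < sqrt (A\<^sup>2 + lam\<^sup>2)" by simp
    moreover have "sqrt (A\<^sup>2 + lam\<^sup>2) > 0" using assms(3) by (simp add: add_nonneg_pos)
    ultimately show ?thesis
      by (metis abs_ge_minus_self divide_less_eq_1_pos le_less_trans minus_divide_left)
  qed
  ultimately have "(h (pi/2) - h 0) < 1" by simp
  moreover have "real n > 0" using assms(1) by simp
  ultimately show ?thesis unfolding SF by (simp add: divide_strict_right_mono)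
qed

end
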